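(* Let $N=(P,T,F,I,O)$ be a pWF net with a transition $t^*$ and a place $p^*$ such that $t^*\bullet=\{p^*\}$, $\bullet p^*=\{t^*\}$, $p^*\notin I\cup O$, and $F\cap(\bullet t^*\times p^*\bullet)=\emptyset$. Let $M$ be the net with input set $I$ and output set $O$ obtained from $N$ by removing $t^*$, $p^*$ and all edges incident to them, and adding all edges in $\bullet t^*\times p^*\bullet$ (preset and postset taken in $N$). Then $M$ is a pWF net, and if $N$ is sub-sound then $M$ is sub-sound.
   Context: Petri nets and markings. A Petri net is a triple $(P,T,F)$ with $P$ a finite set of places, $T$ a finite set of transitions, $P\cap T=\emptyset$, and $F\subseteq (P\times T)\cup(T\times P)$. For a node $x$, $\bullet x=\{y\mid (y,x)\in F\}$, $x\bullet=\{y\mid (x,y)\in F\}$. A marking is a multiset over $P$ (a function $P\to\mathbb N$); sets of places are identified with bags of multiplicity one, $+,-,\le$ are pointwise, and $k.m$ is the sum of $k$ copies of $m$. Transition $t$ is enabled at $m$ iff $\bullet t\le m$, firing gives $m-\bullet t+t\bullet$, and $m\xrightarrow{*}m'$ denotes reachability by a finite (possibly empty) firing sequence. A pWF net is $(P,T,F,I,O)$ with $(P,T,F)$ a Petri net, $I,O\subseteq P$ non-empty (input/output places), every node reachable by a directed path from some node of $I$, and some node of $O$ reachable from every node; input places may have incoming edges and output places outgoing edges. Sub-soundness. A pWF net is sub-sound if for all integers $k\ge k'\ge 0$ and every marking $m'$: if $k.I\xrightarrow{*}m'+k'.O$ then $m'\xrightarrow{*}(k-k').O$. *)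

theory Defs
  imports Main
begin

definition petri_net :: "'a set \<Rightarrow> 'a set \<Rightarrow> ('a \<times> 'a) set \<Rightarrow> bool" where
  "petri_net P T F \<longleftrightarrow> finite P \<and> finite T \<and> P \<inter> T = {} \<and> F \<subseteq> (P \<times> T) \<union> (T \<times> P)"

definition preset :: "('a \<times> 'a) set \<Rightarrow> 'a \<Rightarrow> 'a set" where
  "preset F x = {y. (y, x) \<in> F}"

definition postset :: "('a \<times> 'a) set \<Rightarrow> 'a \<Rightarrow> 'a set" where
  "postset F x = {y. (x, y) \<in> F}"

definition pWF :: "'a set \<Rightarrow> 'a set \<Rightarrow> ('a \<times> 'a) set \<Rightarrow> 'a set \<Rightarrow> 'a set \<Rightarrow> bool" where
  "pWF P T F In Out \<longleftrightarrow> petri_net P T F \<and> In \<subseteq> P \<and> Out \<subseteq> P \<and> In \<noteq> {} \<and> Out \<noteq> {} \<and>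
     (\<forall>x \<in> P \<union> T. \<exists>i \<in> In. (i, x) \<in> F\<^sup>*) \<and>
     (\<forall>x \<in> P \<union> T. \<exists>q \<in> Out. (x, q) \<in> F\<^sup>*)"

type_synonym 'a marking = "'a \<Rightarrow> nat"

definition is_marking :: "'a set \<Rightarrow> 'a marking \<Rightarrow> bool" where
  "is_marking P m \<longleftrightarrow> (\<forall>p. p \<notin> P \<longrightarrow> m p = 0)"

definition bag :: "'a set \<Rightarrow> 'a marking" where
  "bag A = (\<lambda>p. if p \<in> A then 1 else 0)"

definition smult_mark :: "nat \<Rightarrow> 'a marking \<Rightarrow> 'a marking" where
  "smult_mark k m = (\<lambda>p. k * m p)"

definition enabled :: "('a \<times> 'a) set \<Rightarrow> 'a \<Rightarrow> 'a marking \<Rightarrow> bool" where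
  "enabled F t m \<longleftrightarrow> (\<forall>p. bag (preset F t) p \<le> m p)"

definition fire_step :: "'a set \<Rightarrow> ('a \<times> 'a) set \<Rightarrow> 'a marking \<Rightarrow> 'a marking \<Rightarrow> bool" where
  "fire_step T F m m' \<longleftrightarrow> (\<exists>t \<in> T. enabled F t m \<and> m' = (\<lambda>p. m p - bag (preset F t) p + bag (postset F t) p))"

definition reach :: "'a set \<Rightarrow> ('a \<times> 'a) set \<Rightarrow> 'a marking \<Rightarrow> 'a marking \<Rightarrow> bool" where
  "reach T F = (fire_step T F)\<^sup>*\<^sup>*"

definition sub_sound :: "'a set \<Rightarrow> 'a set \<Rightarrow> ('a \<times> 'a) set \<Rightarrow> 'a set \<Rightarrow> 'a set \<Rightarrow> bool" where
  "sub_sound P T F In Out \<longleftrightarrow>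
     (\<forall>k k' :: nat. \<forall>m'. k' \<le> k \<longrightarrow> is_marking P m' \<longrightarrow>
        reach T F (smult_mark k (bag In)) (\<lambda>p. m' p + smult_mark k' (bag Out) p) \<longrightarrow>
        reach T F m' (smult_mark (k - k') (bag Out)))"

definition red_flow :: "('a \<times> 'a) set \<Rightarrow> 'a \<Rightarrow> 'a \<Rightarrow> ('a \<times> 'a) set" where
  "red_flow F ts ps =
     {(x, y) \<in> F. x \<notin> {ts, ps} \<and> y \<notin> {ts, ps}} \<union> (preset F ts \<times> postset F ps)"

end

theory Submission
  imports Defs
begin

locale red =
  fixes P T :: "'a set" and F :: "('a \<times> 'a) set" and ts ps :: 'a
  assumes pn: "petri_net P T F" and ts: "ts \<in> T" and ps: "ps \<in> P"
  and post_ts: "postset F ts = {ps}" and pre_ps: "preset F ps = {ts}"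
  and disj: "F \<inter> (preset F ts \<times> postset F ps) = {}"
begin

lemma FPT: "(x,y) \<in> F \<Longrightarrow> (x \<in> P \<and> y \<in> T) \<or> (x \<in> T \<and> y \<in> P)"
  using pn unfolding petri_net_def by auto
lemma PT: "P \<inter> T = {}" using pn unfolding petri_net_def by auto
lemma tsps: "ts \<noteq> ps" using ts ps PT by auto
lemma pre_ts_P: "preset F ts \<subseteq> P" using FPT ts PT by (auto simp: preset_def)
lemma ps_notin_pre_ts: "ps \<notin> preset F ts"
  using disj by (auto simp: preset_def postset_def)
lemma ts_notin_post_ps: "ts \<notin> postset F ps"
  using disj by (auto simp: preset_def postset_def)
lemma post_t_notps: "t \<noteq> ts \<Longrightarrow> ps \<notin> postset F t"
  using pre_ps by (auto simp: preset_def postset_def)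
lemma pre_disj: "t \<in> postset F ps \<Longrightarrow> y \<in> preset F ts \<Longrightarrow> y \<notin> preset F t"
  using disj by (auto simp: preset_def postset_def)
lemma post_ps_T: "postset F ps \<subseteq> T" using FPT ps PT by (auto simp: postset_def)

abbreviation "F' \<equiv> red_flow F ts ps"

lemma bag_pre': assumes "t \<in> T" "t \<noteq> ts"
  shows "bag (preset F' t) p = (if p = ps then 0 else bag (preset F t) p)
     + (if t \<in> postset F ps then bag (preset F ts) p else 0)"
proof -
  have tps: "t \<noteq> ps" using assms ps PT by auto
  have "(ts, t) \<notin> F" using FPT assms ts PT by blast
  then have e: "preset F' t = (preset F t - {ps}) \<union> (if t \<in> postset F ps then preset F ts else {})"
    using tps assms by (auto simp: red_flow_def preset_def)
  show ?thesis unfolding e using pre_disj[of t p] ps_notin_pre_ts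
    by (auto simp: bag_def)
qed

lemma bag_post': assumes "t \<in> T" "t \<noteq> ts"
  shows "bag (postset F' t) = bag (postset F t)"
proof -
  have tps: "t \<noteq> ps" using assms ps PT by auto
  have "(t, ts) \<notin> F" using FPT assms ts PT by blast
  moreover have "t \<notin> preset F ts" using pre_ts_P assms PT by auto
  ultimately have e: "postset F' t = postset F t"
    using tps assms post_t_notps[of t] by (auto simp: red_flow_def postset_def)
  show ?thesis unfolding e ..
qed

definition phi :: "'a marking \<Rightarrow> 'a marking" where
  "phi m = (\<lambda>p. if p = ps then 0 else m p + m ps * bag (preset F ts) p)"

lemma B_ps: "bag (preset F ts) ps = 0" using ps_notin_pre_ts by (simp add: bag_def)
lemma A_ps: "t \<in> T \<Longrightarrow> bag (preset F t) ps = (if t \<in> postset F ps then 1 else 0)"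
  by (simp add: bag_def preset_def postset_def)
lemma C_ps: "t \<noteq> ts \<Longrightarrow> bag (postset F t) ps = 0"
  using post_t_notps by (simp add: bag_def)
lemma bag_le1: "bag A p \<le> 1" by (simp add: bag_def)

lemma sim_back: assumes "fire_step T F m m2"
  shows "reach (T - {ts}) F' (phi m) (phi m2)"
proof -
  obtain t where t: "t \<in> T" and en: "enabled F t m"
    and m2: "m2 = (\<lambda>p. m p - bag (preset F t) p + bag (postset F t) p)"
    using assms unfolding fire_step_def by blast
  let ?B = "bag (preset F ts)"
  show ?thesis
  proof (cases "t = ts")
    case True
    have "phi m2 = phi m"
    proof
      fix p
      have le: "?B p \<le> m p" using en True by (simp add: enabled_def)
      have "\<And>q. bag (postset F ts) q = (if q = ps then 1 else 0)" using post_ts by (simp add: bag_def)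
      then show "phi m2 p = phi m p" using le B_ps unfolding phi_def m2 True
        by (auto simp: algebra_simps)
    qed
    then show ?thesis by (simp add: reach_def)
  next
    case False
    let ?A = "bag (preset F t)" and ?C = "bag (postset F t)"
    have le: "\<And>p. ?A p \<le> m p" using en by (simp add: enabled_def)
    have Cps: "?C ps = 0" using C_ps False .
    have "fire_step (T - {ts}) F' (phi m) (phi m2)"
      unfolding fire_step_def
    proof (intro bexI conjI)
      show "t \<in> T - {ts}" using t False by simp
      show "enabled F' t (phi m)" unfolding enabled_def
      proof
        fix p
        show "bag (preset F' t) p \<le> phi m p"
        proof (cases "t \<in> postset F ps")
          case True
          then have "m ps \<ge> 1" using le[of ps] A_ps[OF t] by simp
          then have bb: "?B p \<le> m ps * ?B p" by simp
          have "?A p + ?B p \<le> m p + m ps * ?B p" using add_mono[OF le[of p] bb] .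
          then show ?thesis using B_ps bag_pre'[OF t False, of p] True
            by (auto simp: phi_def)
        next
          case f2: False
          then show ?thesis using le[of p] bag_pre'[OF t False, of p] A_ps[OF t]
            by (auto simp: phi_def)
        qed
      qed
      show "phi m2 = (\<lambda>p. phi m p - bag (preset F' t) p + bag (postset F' t) p)"
      proof
        fix p
        show "phi m2 p = phi m p - bag (preset F' t) p + bag (postset F' t) p"
        proof (cases "t \<in> postset F ps")
          case True
          then obtain n where n: "m ps = Suc n" using le[of ps] A_ps[OF t]
            by (cases "m ps") auto
          show ?thesis using le[of p] B_ps bag_pre'[OF t False, of p] True
            bag_post'[OF t False] Cps A_ps[OF t] n
            by (auto simp: phi_def m2 algebra_simps)
        next
          case f2: False
          show ?thesis using le[of p] B_ps bag_pre'[OF t False, of p] f2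
            bag_post'[OF t False] Cps A_ps[OF t]
            by (auto simp: phi_def m2 algebra_simps)
        qed
      qed
    qed
    then show ?thesis by (simp add: reach_def)
  qed
qed

lemma reach_back: assumes "reach T F m m2" shows "reach (T - {ts}) F' (phi m) (phi m2)"
  using assms unfolding reach_def
proof (induction rule: rtranclp_induct)
  case base then show ?case by simp
next
  case (step y z)
  then show ?case using sim_back[of y z] unfolding reach_def by simp
qed

lemma sim_fwd: assumes "fire_step (T - {ts}) F' m m2" and "m ps = 0"
  shows "m2 ps = 0 \<and> reach T F m m2"
proof -
  obtain t where t: "t \<in> T" and tn: "t \<noteq> ts" and en: "enabled F' t m"
    and m2: "m2 = (\<lambda>p. m p - bag (preset F' t) p + bag (postset F' t) p)"
    using assms unfolding fire_step_def by blast
  let ?A = "bag (preset F t)" and ?C = "bag (postset F t)" and ?B = "bag (preset F ts)"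
  have le: "\<And>p. bag (preset F' t) p \<le> m p" using en by (simp add: enabled_def)
  have Cps: "?C ps = 0" using C_ps tn .
  have post': "bag (postset F' t) = ?C" using bag_post'[OF t tn] .
  have m2ps: "m2 ps = 0" using assms(2) Cps post' by (simp add: m2)
  have "reach T F m m2"
  proof (cases "t \<in> postset F ps")
    case False
    have "fire_step T F m m2" unfolding fire_step_def
    proof (intro bexI conjI)
      show "t \<in> T" by fact
      have eqA: "\<And>p. bag (preset F' t) p = ?A p"
        using bag_pre'[OF t tn] False A_ps[OF t] by simp
      show "enabled F t m" unfolding enabled_def
        using le eqA by simp
      show "m2 = (\<lambda>p. m p - ?A p + ?C p)"
        unfolding m2 post' eqA ..
    qed
    then show ?thesis by (simp add: reach_def)
  next
    case True
    define m1 where "m1 = (\<lambda>p. m p - ?B p + bag (postset F ts) p)"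
    have pts: "\<And>q. bag (postset F ts) q = (if q = ps then 1 else 0)" using post_ts by (simp add: bag_def)
    have s1: "fire_step T F m m1" unfolding fire_step_def
    proof (intro bexI conjI)
      show "ts \<in> T" by (rule ts)
      show "enabled F ts m" unfolding enabled_def
      proof
        fix p show "?B p \<le> m p" using le[of p] bag_pre'[OF t tn, of p] True by simp
      qed
      show "m1 = (\<lambda>p. m p - ?B p + bag (postset F ts) p)" by (simp add: m1_def)
    qed
    have s2: "fire_step T F m1 m2" unfolding fire_step_def
    proof (intro bexI conjI)
      show "t \<in> T" by fact
      show "enabled F t m1" unfolding enabled_def
      proof
        fix p show "?A p \<le> m1 p"
          using le[of p] bag_pre'[OF t tn, of p] True A_ps[OF t] assms(2) pts[of p] B_ps
          by (cases "p = ps") (auto simp: m1_def)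
      qed
      show "m2 = (\<lambda>p. m1 p - ?A p + ?C p)"
      proof
        fix p show "m2 p = m1 p - ?A p + ?C p"
          using le[of p] bag_pre'[OF t tn, of p] True A_ps[OF t] assms(2) pts[of p] B_ps Cps
          by (cases "p = ps") (auto simp: m1_def m2 post')
      qed
    qed
    show ?thesis using s1 s2 unfolding reach_def by auto
  qed
  then show ?thesis using m2ps by simp
qed

lemma reach_fwd: assumes "reach (T - {ts}) F' m m2" and "m ps = 0"
  shows "m2 ps = 0 \<and> reach T F m m2"
  using assms(1) unfolding reach_def
proof (induction rule: rtranclp_induct)
  case base then show ?case using assms(2) by simp
next
  case (step y z)
  then show ?case using sim_fwd[of y z] unfolding reach_def by auto
qed

lemma path: assumes "(a, b) \<in> F\<^sup>*" and "a \<notin> {ts, ps}"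
  shows "(b \<notin> {ts, ps} \<longrightarrow> (a, b) \<in> F'\<^sup>*) \<and>
         (b \<in> {ts, ps} \<longrightarrow> (\<exists>q \<in> preset F ts. (a, q) \<in> F'\<^sup>*))"
  using assms(1)
proof (induction rule: rtrancl_induct)
  case base then show ?case using assms(2) by simp
next
  case (step b c)
  have nps: "(ps, ps) \<notin> F" using FPT PT ps by blast
  show ?case
  proof (cases "b \<in> {ts, ps}")
    case False
    then have ab: "(a, b) \<in> F'\<^sup>*" using step by simp
    show ?thesis
    proof (cases "c \<in> {ts, ps}")
      case False
      then have "(b, c) \<in> F'" using \<open>b \<notin> {ts, ps}\<close> step(2) by (auto simp: red_flow_def)
      then show ?thesis using ab False by auto
    next
      case True
      moreover have "c \<noteq> ps" using pre_ps step(2) \<open>b \<notin> {ts, ps}\<close> by (auto simp: preset_def)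
      ultimately have "c = ts" by simp
      then have "b \<in> preset F ts" using step(2) by (simp add: preset_def)
      then show ?thesis using ab True by auto
    qed
  next
    case True
    then obtain q where q: "q \<in> preset F ts" "(a, q) \<in> F'\<^sup>*" using step by auto
    show ?thesis
    proof (cases "b = ts")
      case True
      then have "c = ps" using post_ts step(2) by (auto simp: postset_def)
      then show ?thesis using q by auto
    next
      case False
      then have bps: "b = ps" using True by simp
      then have cpost: "c \<in> postset F ps" using step(2) by (simp add: postset_def)
      then have "c \<noteq> ts" using ts_notin_post_ps by auto
      moreover have "c \<noteq> ps" using nps step(2) bps by auto
      moreover have "(q, c) \<in> F'" using q(1) cpost by (simp add: red_flow_def)
      ultimately show ?thesis using q(2) by auto
    qed
  qed
qed

end

theorem mainTheorem11:
  fixes P T In Out :: "'a set" and F :: "('a \<times> 'a) set" and ts ps :: 'a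
  assumes "pWF P T F In Out"
    and "ts \<in> T" and "ps \<in> P"
    and "postset F ts = {ps}" and "preset F ps = {ts}"
    and "ps \<notin> In \<union> Out"
    and "F \<inter> (preset F ts \<times> postset F ps) = {}"
  shows "pWF (P - {ps}) (T - {ts}) (red_flow F ts ps) In Out \<and>
         (sub_sound P T F In Out \<longrightarrow> sub_sound (P - {ps}) (T - {ts}) (red_flow F ts ps) In Out)"
proof -
  have pn: "petri_net P T F" using assms(1) by (simp add: pWF_def)
  interpret r: red P T F ts ps
    using pn assms(2-5,7) by unfold_locales
  have InP: "In \<subseteq> P" and OutP: "Out \<subseteq> P" using assms(1) by (auto simp: pWF_def)
  have tsnP: "ts \<notin> P" using r.PT assms(2) by auto
  have pw: "pWF (P - {ps}) (T - {ts}) (red_flow F ts ps) In Out"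
    unfolding pWF_def
  proof (intro conjI)
    show "petri_net (P - {ps}) (T - {ts}) (red_flow F ts ps)"
      unfolding petri_net_def
    proof (intro conjI)
      show "finite (P - {ps})" "finite (T - {ts})" "(P - {ps}) \<inter> (T - {ts}) = {}"
        using pn by (auto simp: petri_net_def)
      show "red_flow F ts ps \<subseteq> (P - {ps}) \<times> (T - {ts}) \<union> (T - {ts}) \<times> (P - {ps})"
      proof
        fix z assume z: "z \<in> red_flow F ts ps"
        obtain x y where zz: "z = (x, y)" by (cases z)
        show "z \<in> (P - {ps}) \<times> (T - {ts}) \<union> (T - {ts}) \<times> (P - {ps})"
        proof (cases "(x, y) \<in> F \<and> x \<notin> {ts, ps} \<and> y \<notin> {ts, ps}")
          case True then show ?thesis using r.FPT[of x y] zz by auto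
        next
          case False
          then have "x \<in> preset F ts" "y \<in> postset F ps" using z zz by (auto simp: red_flow_def)
          then show ?thesis using zz r.pre_ts_P r.post_ps_T r.ps_notin_pre_ts r.ts_notin_post_ps
            by auto
        qed
      qed
    qed
    show "In \<subseteq> P - {ps}" "Out \<subseteq> P - {ps}" "In \<noteq> {}" "Out \<noteq> {}"
      using assms(1,6) by (auto simp: pWF_def)
    show "\<forall>x\<in>P - {ps} \<union> (T - {ts}). \<exists>i\<in>In. (i, x) \<in> (red_flow F ts ps)\<^sup>*"
    proof
      fix x assume x: "x \<in> P - {ps} \<union> (T - {ts})"
      have "x \<in> P \<union> T" using x by auto
      then obtain i where i: "i \<in> In" "(i, x) \<in> F\<^sup>*" using assms(1) unfolding pWF_def by blast
      have "i \<notin> {ts, ps}" using i(1) InP tsnP assms(6) by auto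
      moreover have "x \<notin> {ts, ps}" using x tsnP r.PT assms(2,3) by auto
      ultimately show "\<exists>i\<in>In. (i, x) \<in> (red_flow F ts ps)\<^sup>*" using r.path[OF i(2)] i(1) by auto
    qed
    show "\<forall>x\<in>P - {ps} \<union> (T - {ts}). \<exists>q\<in>Out. (x, q) \<in> (red_flow F ts ps)\<^sup>*"
    proof
      fix x assume x: "x \<in> P - {ps} \<union> (T - {ts})"
      have "x \<in> P \<union> T" using x by auto
      then obtain q where q: "q \<in> Out" "(x, q) \<in> F\<^sup>*" using assms(1) unfolding pWF_def by blast
      have "q \<notin> {ts, ps}" using q(1) OutP tsnP assms(6) by auto
      moreover have "x \<notin> {ts, ps}" using x tsnP r.PT assms(2,3) by auto
      ultimately show "\<exists>q\<in>Out. (x, q) \<in> (red_flow F ts ps)\<^sup>*" using r.path[OF q(2)] q(1) by auto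
    qed
  qed
  have ss: "sub_sound (P - {ps}) (T - {ts}) (red_flow F ts ps) In Out"
    if sN: "sub_sound P T F In Out"
    unfolding sub_sound_def
  proof (intro allI impI)
    fix k k' :: nat and m' :: "'a marking"
    assume kk: "k' \<le> k" and mm: "is_marking (P - {ps}) m'"
      and rM: "reach (T - {ts}) (red_flow F ts ps) (smult_mark k (bag In))
                 (\<lambda>p. m' p + smult_mark k' (bag Out) p)"
    have m'ps: "m' ps = 0" using mm by (simp add: is_marking_def)
    have "smult_mark k (bag In) ps = 0" using assms(6) by (simp add: smult_mark_def bag_def)
    then have rN: "reach T F (smult_mark k (bag In)) (\<lambda>p. m' p + smult_mark k' (bag Out) p)"
      using r.reach_fwd[OF rM] by simp
    have "is_marking P m'" using mm by (auto simp: is_marking_def)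
    then have "reach T F m' (smult_mark (k - k') (bag Out))"
      using sN kk rN unfolding sub_sound_def by blast
    then have "reach (T - {ts}) (red_flow F ts ps) (r.phi m') (r.phi (smult_mark (k - k') (bag Out)))"
      by (rule r.reach_back)
    moreover have "r.phi m' = m'" using m'ps by (auto simp: r.phi_def)
    moreover have "r.phi (smult_mark (k - k') (bag Out)) = smult_mark (k - k') (bag Out)"
      using assms(6) by (auto simp: r.phi_def smult_mark_def bag_def)
    ultimately show "reach (T - {ts}) (red_flow F ts ps) m' (smult_mark (k - k') (bag Out))" by simp
  qed
  show ?thesis using pw ss by blast
qed

end
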